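(* Let $G\in\mathcal{RG}^{{\underline{\kappa}},*}_{g,n}$ be non-bipartite, $w$ a weight function on $G$ with $\operatorname{vp}_G(w)=\underline b$, and $e\in S(G)$ a static edge. (1) If $e$ is a bridge, let $G'$ be the bipartite connected component of $G-e$, colored black/white so that $e$ is incident to a black vertex, and let $I,J\subset\{1,\dots,n\}$ be the labels of black and white vertices of $G'$. Then $w(e)=\sum_{i\in I}b_i-\sum_{j\in J}b_j$. (2) If $e$ is not a bridge, then $G-e$ is connected and bipartite; color it so that both endpoints of $e$ are black and let $I,J$ be the labels of black and white vertices. Then $I\cup J=\{1,\dots,n\}$ and $w(e)=\tfrac12\bigl(\sum_{i\in I}b_i-\sum_{j\in J}b_j\bigr)$.
   Context: A ribbon graph is a finite graph (loops and multiple edges allowed) with a cyclic ordering of half-edges at each vertex; the cyclic orders determine faces (boundary cycles) and the genus. For a partition ${\underline{\kappa}}$ with all parts odd, $\mathcal{RG}^{{\underline{\kappa}},*}_{g,n}$ is the set of isomorphism classes of connected ribbon graphs of genus $g$ with $n$ vertices labeled $1,\dots,n$ and face degrees given by ${\underline{\kappa}}$ (the duals of ribbon graphs with $n$ labeled faces and vertex degrees ${\underline{\kappa}}$). A weight function is any $w:E(G)\to\mathbb R$; its vertex perimeters are $\operatorname{vp}_G(w)_v=\sum_e a_{ve}w(e)$ with $a_{ve}=2$ if $e$ is a loop at $v$, $1$ if $e$ is a non-loop edge incident to $v$, $0$ otherwise. For non-bipartite $G$, an edge $e$ is static if at least one connected component of $G-e$ is bipartite; $S(G)$ is the set of static edges.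 *)

theory Defs
  imports Complex_Main "HOL-Library.Multiset" "HOL-Combinatorics.Permutations"
begin

text \<open>Combinatorial ribbon graphs: a finite set H of half-edges, a permutation
  sigma of H (cyclic order at vertices) and a fixed-point-free involution alpha of H
  (edges).\<close>

definition rg_orbit :: "('h \<Rightarrow> 'h) \<Rightarrow> 'h \<Rightarrow> 'h set" where
  "rg_orbit f h = {(f ^^ k) h | k. True}"

definition rg_vertices :: "'h set \<Rightarrow> ('h \<Rightarrow> 'h) \<Rightarrow> 'h set set" where
  "rg_vertices H \<sigma> = {rg_orbit \<sigma> h | h. h \<in> H}"

definition rg_edges :: "'h set \<Rightarrow> ('h \<Rightarrow> 'h) \<Rightarrow> 'h set set" where
  "rg_edges H \<alpha> = {{h, \<alpha> h} | h. h \<in> H}"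

definition rg_faces :: "'h set \<Rightarrow> ('h \<Rightarrow> 'h) \<Rightarrow> ('h \<Rightarrow> 'h) \<Rightarrow> 'h set set" where
  "rg_faces H \<sigma> \<alpha> = {rg_orbit (\<sigma> \<circ> \<alpha>) h | h. h \<in> H}"

definition ribbon_graph :: "'h set \<Rightarrow> ('h \<Rightarrow> 'h) \<Rightarrow> ('h \<Rightarrow> 'h) \<Rightarrow> bool" where
  "ribbon_graph H \<sigma> \<alpha> \<longleftrightarrow> finite H \<and> \<sigma> permutes H \<and> \<alpha> permutes H \<and>
     (\<forall>h\<in>H. \<alpha> (\<alpha> h) = h \<and> \<alpha> h \<noteq> h)"

definition vertex_labelling :: "'h set \<Rightarrow> ('h \<Rightarrow> 'h) \<Rightarrow> ('h \<Rightarrow> nat) \<Rightarrow> nat \<Rightarrow> bool" where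
  "vertex_labelling H \<sigma> lab n \<longleftrightarrow> lab ` H = {1..n} \<and>
     (\<forall>h\<in>H. \<forall>h'\<in>H. lab h = lab h' \<longleftrightarrow> h' \<in> rg_orbit \<sigma> h)"

definition rg_adj :: "'h set \<Rightarrow> ('h \<Rightarrow> 'h) \<Rightarrow> ('h \<Rightarrow> nat) \<Rightarrow> 'h set set \<Rightarrow> nat \<Rightarrow> nat \<Rightarrow> bool" where
  "rg_adj H \<alpha> lab F u v \<longleftrightarrow> (\<exists>h\<in>H. {h, \<alpha> h} \<in> F \<and> lab h = u \<and> lab (\<alpha> h) = v)"

definition rg_reach :: "'h set \<Rightarrow> ('h \<Rightarrow> 'h) \<Rightarrow> ('h \<Rightarrow> nat) \<Rightarrow> 'h set set \<Rightarrow> nat \<Rightarrow> nat \<Rightarrow> bool" where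
  "rg_reach H \<alpha> lab F = (rg_adj H \<alpha> lab F)\<^sup>*\<^sup>*"

definition rg_connected :: "'h set \<Rightarrow> ('h \<Rightarrow> 'h) \<Rightarrow> ('h \<Rightarrow> nat) \<Rightarrow> nat \<Rightarrow> 'h set set \<Rightarrow> bool" where
  "rg_connected H \<alpha> lab n F \<longleftrightarrow> (\<forall>u\<in>{1..n}. \<forall>v\<in>{1..n}. rg_reach H \<alpha> lab F u v)"

definition rg_component :: "'h set \<Rightarrow> ('h \<Rightarrow> 'h) \<Rightarrow> ('h \<Rightarrow> nat) \<Rightarrow> nat \<Rightarrow> 'h set set \<Rightarrow> nat set \<Rightarrow> bool" where
  "rg_component H \<alpha> lab n F C \<longleftrightarrow>
     (\<exists>u\<in>{1..n}. C = {v\<in>{1..n}. rg_reach H \<alpha> lab F u v})"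

text \<open>col is a proper black(True)/white(False) colouring of the subgraph on vertex set C
  (C a union of components) with edge set F.\<close>
definition proper_colouring :: "'h set \<Rightarrow> ('h \<Rightarrow> 'h) \<Rightarrow> ('h \<Rightarrow> nat) \<Rightarrow> 'h set set \<Rightarrow> nat set \<Rightarrow> (nat \<Rightarrow> bool) \<Rightarrow> bool" where
  "proper_colouring H \<alpha> lab F C col \<longleftrightarrow>
     (\<forall>h\<in>H. {h, \<alpha> h} \<in> F \<and> lab h \<in> C \<longrightarrow> col (lab h) \<noteq> col (lab (\<alpha> h)))"

definition rg_bipartite :: "'h set \<Rightarrow> ('h \<Rightarrow> 'h) \<Rightarrow> ('h \<Rightarrow> nat) \<Rightarrow> 'h set set \<Rightarrow> nat set \<Rightarrow> bool" where
  "rg_bipartite H \<alpha> lab F C \<longleftrightarrow> (\<exists>col. proper_colouring H \<alpha> lab F C col)"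

definition in_RG :: "'h set \<Rightarrow> ('h \<Rightarrow> 'h) \<Rightarrow> ('h \<Rightarrow> 'h) \<Rightarrow> ('h \<Rightarrow> nat) \<Rightarrow>
     nat multiset \<Rightarrow> nat \<Rightarrow> nat \<Rightarrow> bool" where
  "in_RG H \<sigma> \<alpha> lab \<kappa> g n \<longleftrightarrow>
     ribbon_graph H \<sigma> \<alpha> \<and> vertex_labelling H \<sigma> lab n \<and>
     rg_connected H \<alpha> lab n (rg_edges H \<alpha>) \<and>
     image_mset card (mset_set (rg_faces H \<sigma> \<alpha>)) = \<kappa> \<and>
     int (card (rg_vertices H \<sigma>)) - int (card (rg_edges H \<alpha>)) + int (card (rg_faces H \<sigma> \<alpha>))
       = 2 - 2 * int g"

definition incid :: "('h \<Rightarrow> 'h) \<Rightarrow> ('h \<Rightarrow> nat) \<Rightarrow> nat \<Rightarrow> 'h set \<Rightarrow> real" where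
  "incid \<alpha> lab v e =
     (if (\<forall>h\<in>e. lab h = v) then 2 else if (\<exists>h\<in>e. lab h = v) then 1 else 0)"

definition vp :: "'h set \<Rightarrow> ('h \<Rightarrow> 'h) \<Rightarrow> ('h \<Rightarrow> nat) \<Rightarrow> ('h set \<Rightarrow> real) \<Rightarrow> nat \<Rightarrow> real" where
  "vp H \<alpha> lab w v = (\<Sum>e\<in>rg_edges H \<alpha>. incid \<alpha> lab v e * w e)"

definition static_edge :: "'h set \<Rightarrow> ('h \<Rightarrow> 'h) \<Rightarrow> ('h \<Rightarrow> nat) \<Rightarrow> nat \<Rightarrow> 'h set \<Rightarrow> bool" where
  "static_edge H \<alpha> lab n e \<longleftrightarrow> e \<in> rg_edges H \<alpha> \<and>
     (\<exists>C. rg_component H \<alpha> lab n (rg_edges H \<alpha> - {e}) C \<and>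
          rg_bipartite H \<alpha> lab (rg_edges H \<alpha> - {e}) C)"

text \<open>For a connected graph, e is a bridge iff G - e is disconnected.\<close>
definition is_bridge :: "'h set \<Rightarrow> ('h \<Rightarrow> 'h) \<Rightarrow> ('h \<Rightarrow> nat) \<Rightarrow> nat \<Rightarrow> 'h set \<Rightarrow> bool" where
  "is_bridge H \<alpha> lab n e \<longleftrightarrow> e \<in> rg_edges H \<alpha> \<and> \<not> rg_connected H \<alpha> lab n (rg_edges H \<alpha> - {e})"

end

theory Submission
  imports Defs
begin

lemma incid_eq: "incid \<alpha> lab v {h, \<alpha> h} =
   (if lab h = v then 1 else 0) + (if lab (\<alpha> h) = v then 1 else 0)"
  unfolding incid_def by auto

lemma contrib: "finite S \<Longrightarrow> (\<Sum>v\<in>S. s v * incid \<alpha> lab v {h, \<alpha> h}) =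
   (if lab h \<in> S then s (lab h) else 0) + (if lab (\<alpha> h) \<in> S then s (lab (\<alpha> h)) else 0)"
  by (simp add: incid_eq distrib_left sum.distrib if_distrib[where f="\<lambda>x. _ * x"] sum.delta cong: if_cong)

lemma fin_edges: "finite H \<Longrightarrow> finite (rg_edges H \<alpha>)"
proof -
  assume "finite H"
  have "rg_edges H \<alpha> = (\<lambda>h. {h, \<alpha> h}) ` H" unfolding rg_edges_def by auto
  thus ?thesis using \<open>finite H\<close> by simp
qed

lemma sum_swap:
  assumes "finite H" "finite S" "\<forall>i\<in>S. vp H \<alpha> lab w i = b i"
  shows "(\<Sum>v\<in>S. s v * b v) = (\<Sum>f\<in>rg_edges H \<alpha>. w f * (\<Sum>v\<in>S. s v * incid \<alpha> lab v f))"
proof -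
  have "(\<Sum>v\<in>S. s v * b v) = (\<Sum>v\<in>S. s v * vp H \<alpha> lab w v)" using assms(3) by simp
  also have "\<dots> = (\<Sum>v\<in>S. \<Sum>f\<in>rg_edges H \<alpha>. s v * (incid \<alpha> lab v f * w f))"
    unfolding vp_def by (simp add: sum_distrib_left)
  also have "\<dots> = (\<Sum>f\<in>rg_edges H \<alpha>. \<Sum>v\<in>S. s v * (incid \<alpha> lab v f * w f))"
    by (rule sum.swap)
  also have "\<dots> = (\<Sum>f\<in>rg_edges H \<alpha>. w f * (\<Sum>v\<in>S. s v * incid \<alpha> lab v f))"
    by (simp add: sum_distrib_left mult_ac)
  finally show ?thesis .
qed

lemma key:
  assumes rg: "ribbon_graph H \<sigma> \<alpha>" and fS: "finite C"
    and vp: "\<forall>i\<in>C. vp H \<alpha> lab w i = b i"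
    and h0: "h0 \<in> H" and e: "e = {h0, \<alpha> h0}"
    and closed: "\<forall>h\<in>H. {h, \<alpha> h} \<in> rg_edges H \<alpha> - {e} \<and> lab h \<in> C \<longrightarrow>
        lab (\<alpha> h) \<in> C \<and> col (lab h) \<noteq> col (lab (\<alpha> h))"
  shows "(\<Sum>v\<in>C. (if col v then 1 else -1) * b v) = w e *
     ((if lab h0 \<in> C then (if col (lab h0) then 1 else -1) else 0) +
      (if lab (\<alpha> h0) \<in> C then (if col (lab (\<alpha> h0)) then 1 else -1) else 0))"
proof -
  define s where "s = (\<lambda>v. if col v then 1 else (-1::real))"
  have fH: "finite H" and inv: "\<forall>h\<in>H. \<alpha> (\<alpha> h) = h" and ap: "\<alpha> permutes H"
    using rg unfolding ribbon_graph_def by auto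
  have aH: "\<And>h. h \<in> H \<Longrightarrow> \<alpha> h \<in> H" using ap by (simp add: permutes_in_image)
  have fE: "finite (rg_edges H \<alpha>)" using fin_edges fH by blast
  have eE: "e \<in> rg_edges H \<alpha>" using h0 e unfolding rg_edges_def by auto
  have S: "(\<Sum>v\<in>C. s v * b v) = (\<Sum>f\<in>rg_edges H \<alpha>. w f * (\<Sum>v\<in>C. s v * incid \<alpha> lab v f))"
    by (rule sum_swap[OF fH fS vp])
  also have "\<dots> = w e * (\<Sum>v\<in>C. s v * incid \<alpha> lab v e) +
      (\<Sum>f\<in>rg_edges H \<alpha> - {e}. w f * (\<Sum>v\<in>C. s v * incid \<alpha> lab v f))"
    using sum.remove[OF fE eE] by simp
  also have "(\<Sum>f\<in>rg_edges H \<alpha> - {e}. w f * (\<Sum>v\<in>C. s v * incid \<alpha> lab v f)) = 0"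
  proof (rule sum.neutral, rule ballI)
    fix f assume f: "f \<in> rg_edges H \<alpha> - {e}"
    then obtain h where h: "h \<in> H" "f = {h, \<alpha> h}" unfolding rg_edges_def by auto
    have f2: "{\<alpha> h, \<alpha> (\<alpha> h)} = f" using h inv by auto
    have c1: "lab h \<in> C \<Longrightarrow> lab (\<alpha> h) \<in> C \<and> col (lab h) \<noteq> col (lab (\<alpha> h))"
      using closed h f by auto
    have c2: "lab (\<alpha> h) \<in> C \<Longrightarrow> lab h \<in> C"
      using closed[rule_format, of "\<alpha> h"] aH[OF h(1)] f f2 inv h by auto
    have "(\<Sum>v\<in>C. s v * incid \<alpha> lab v f) = 0"
      using contrib[OF fS, of s \<alpha> lab h] c1 c2 unfolding h(2) s_def by auto
    thus "w f * (\<Sum>v\<in>C. s v * incid \<alpha> lab v f) = 0" by simp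
  qed
  finally show ?thesis using contrib[OF fS, of s \<alpha> lab h0] unfolding s_def e by simp
qed

lemma signed_sum: "finite C \<Longrightarrow> (\<Sum>i\<in>{v\<in>C. col v}. b i) - (\<Sum>j\<in>{v\<in>C. \<not> col v}. b j)
   = (\<Sum>v\<in>C. (if col v then 1 else -1) * (b v :: real))"
proof -
  assume fC: "finite C"
  have "(\<Sum>v\<in>C. (if col v then 1 else -1) * (b v :: real)) = (\<Sum>v\<in>C. if col v then b v else - b v)"
    by (rule sum.cong) auto
  also have "\<dots> = sum b (C \<inter> {x. col x}) + sum (\<lambda>v. - b v) (C \<inter> - {x. col x})"
    by (rule sum.If_cases[OF fC])
  also have "C \<inter> {x. col x} = {v\<in>C. col v}" by auto
  also have "C \<inter> - {x. col x} = {v\<in>C. \<not> col v}" by auto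
  finally show ?thesis by (simp add: sum_negf)
qed

lemma adj_sym:
  assumes "ribbon_graph H \<sigma> \<alpha>" "rg_adj H \<alpha> lab F u v"
  shows "rg_adj H \<alpha> lab F v u"
proof -
  from assms(2) obtain h where h: "h \<in> H" "{h, \<alpha> h} \<in> F" "lab h = u" "lab (\<alpha> h) = v"
    unfolding rg_adj_def by auto
  have "\<alpha> h \<in> H" "\<alpha> (\<alpha> h) = h" using assms(1) h(1) unfolding ribbon_graph_def
    by (auto simp: permutes_in_image)
  moreover have "{\<alpha> h, \<alpha> (\<alpha> h)} = {h, \<alpha> h}" using calculation by auto
  ultimately show ?thesis unfolding rg_adj_def using h by metis
qed

lemma reach_sym:
  assumes "ribbon_graph H \<sigma> \<alpha>" "rg_reach H \<alpha> lab F u v"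
  shows "rg_reach H \<alpha> lab F v u"
  using assms(2) unfolding rg_reach_def
proof (induction rule: rtranclp_induct)
  case base then show ?case by simp
next
  case (step y z)
  have "rg_adj H \<alpha> lab F z y" using adj_sym[OF assms(1) step(2)] .
  thus ?case using step(3) by (rule converse_rtranclp_into_rtranclp)
qed

theorem lemma3p3:
  fixes H :: "'h set" and \<sigma> \<alpha> :: "'h \<Rightarrow> 'h" and lab :: "'h \<Rightarrow> nat"
    and \<kappa> :: "nat multiset" and g n :: nat
    and w :: "'h set \<Rightarrow> real" and b :: "nat \<Rightarrow> real" and e :: "'h set"
  assumes odd_parts: "\<forall>k\<in>#\<kappa>. odd k"
    and G: "in_RG H \<sigma> \<alpha> lab \<kappa> g n"
    and nonbip: "\<not> rg_bipartite H \<alpha> lab (rg_edges H \<alpha>) {1..n}"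
    and vp: "\<forall>i\<in>{1..n}. vp H \<alpha> lab w i = b i"
    and static: "static_edge H \<alpha> lab n e"
  shows
    "(is_bridge H \<alpha> lab n e \<longrightarrow>
       (\<forall>C col. rg_component H \<alpha> lab n (rg_edges H \<alpha> - {e}) C \<and>
                proper_colouring H \<alpha> lab (rg_edges H \<alpha> - {e}) C col \<and>
                (\<exists>h\<in>e. lab h \<in> C \<and> col (lab h)) \<longrightarrow>
          w e = (\<Sum>i\<in>{v\<in>C. col v}. b i) - (\<Sum>j\<in>{v\<in>C. \<not> col v}. b j)))
   \<and> (\<not> is_bridge H \<alpha> lab n e \<longrightarrow>
       rg_connected H \<alpha> lab n (rg_edges H \<alpha> - {e}) \<and>
       rg_bipartite H \<alpha> lab (rg_edges H \<alpha> - {e}) {1..n} \<and>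
       (\<exists>col. proper_colouring H \<alpha> lab (rg_edges H \<alpha> - {e}) {1..n} col \<and>
              (\<forall>h\<in>e. col (lab h))) \<and>
       (\<forall>col. proper_colouring H \<alpha> lab (rg_edges H \<alpha> - {e}) {1..n} col \<and>
              (\<forall>h\<in>e. col (lab h)) \<longrightarrow>
          {v\<in>{1..n}. col v} \<union> {v\<in>{1..n}. \<not> col v} = {1..n} \<and>
          w e = ((\<Sum>i\<in>{v\<in>{1..n}. col v}. b i) - (\<Sum>j\<in>{v\<in>{1..n}. \<not> col v}. b j)) / 2))"
proof -
  define E where "E = rg_edges H \<alpha>"
  define F where "F = E - {e}"
  have rg: "ribbon_graph H \<sigma> \<alpha>" and lbl: "vertex_labelling H \<sigma> lab n"
    and conn: "rg_connected H \<alpha> lab n E"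
    using G unfolding in_RG_def E_def by auto
  have fH: "finite H" and inv: "\<forall>h\<in>H. \<alpha> (\<alpha> h) = h" and ap: "\<alpha> permutes H"
    using rg unfolding ribbon_graph_def by auto
  have aH: "\<And>h. h \<in> H \<Longrightarrow> \<alpha> h \<in> H" using ap by (simp add: permutes_in_image)
  have labH: "\<And>h. h \<in> H \<Longrightarrow> lab h \<in> {1..n}" using lbl unfolding vertex_labelling_def by auto
  have eE: "e \<in> E" using static unfolding static_edge_def E_def by auto
  then obtain h0 where h0: "h0 \<in> H" "e = {h0, \<alpha> h0}" unfolding E_def rg_edges_def by auto
  have ah0: "\<alpha> h0 \<in> H" using aH h0 by auto
  have inE: "\<And>h. h \<in> H \<Longrightarrow> {h, \<alpha> h} \<in> E" unfolding E_def rg_edges_def by auto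
  have comp_closed: "\<And>C h. rg_component H \<alpha> lab n F C \<Longrightarrow> h \<in> H \<Longrightarrow> {h, \<alpha> h} \<in> F
      \<Longrightarrow> lab h \<in> C \<Longrightarrow> lab (\<alpha> h) \<in> C"
  proof -
    fix C h assume c: "rg_component H \<alpha> lab n F C" "h \<in> H" "{h, \<alpha> h} \<in> F" "lab h \<in> C"
    then obtain u where u: "u \<in> {1..n}" "C = {v\<in>{1..n}. rg_reach H \<alpha> lab F u v}"
      unfolding rg_component_def by auto
    have "rg_adj H \<alpha> lab F (lab h) (lab (\<alpha> h))" unfolding rg_adj_def using c by auto
    hence "rg_reach H \<alpha> lab F u (lab (\<alpha> h))" using c(4) u unfolding rg_reach_def
      by (auto intro: rtranclp.rtrancl_into_rtrancl)
    thus "lab (\<alpha> h) \<in> C" using u labH aH c(2) by auto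
  qed
  have comp_fin: "\<And>C. rg_component H \<alpha> lab n F C \<Longrightarrow> finite C \<and> C \<subseteq> {1..n}"
    unfolding rg_component_def by auto
  have vpC: "\<And>C. C \<subseteq> {1..n} \<Longrightarrow> \<forall>i\<in>C. vp H \<alpha> lab w i = b i" using vp by auto
  have both_conn: "\<And>C. rg_component H \<alpha> lab n F C \<Longrightarrow> lab h0 \<in> C \<Longrightarrow> lab (\<alpha> h0) \<in> C
      \<Longrightarrow> rg_connected H \<alpha> lab n F"
  proof -
    fix C assume c: "rg_component H \<alpha> lab n F C" "lab h0 \<in> C" "lab (\<alpha> h0) \<in> C"
    then obtain u where u: "u \<in> {1..n}" "C = {v\<in>{1..n}. rg_reach H \<alpha> lab F u v}"
      unfolding rg_component_def by auto
    have all: "rg_reach H \<alpha> lab F u v" if v: "v \<in> {1..n}" for v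
    proof -
      have "rg_reach H \<alpha> lab E u v" using conn u v unfolding rg_connected_def by auto
      thus ?thesis unfolding rg_reach_def
      proof (induction rule: rtranclp_induct)
        case base then show ?case by simp
      next
        case (step a c)
        from step(2) obtain h where h: "h \<in> H" "{h, \<alpha> h} \<in> E" "lab h = a" "lab (\<alpha> h) = c"
          unfolding rg_adj_def by auto
        show ?case
        proof (cases "{h, \<alpha> h} = e")
          case True
          hence "h = h0 \<or> h = \<alpha> h0" using h0 by (auto simp: doubleton_eq_iff)
          hence "c = lab h0 \<or> c = lab (\<alpha> h0)" using h inv h0 by auto
          thus ?thesis using c u unfolding rg_reach_def by auto
        next
          case False
          hence "rg_adj H \<alpha> lab F a c" unfolding rg_adj_def F_def using h by auto
          thus ?thesis using step(3) by (auto intro: rtranclp.rtrancl_into_rtrancl)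
        qed
      qed
    qed
    show "rg_connected H \<alpha> lab n F" unfolding rg_connected_def
    proof (intro ballI)
      fix a c assume "a \<in> {1..n}" "c \<in> {1..n}"
      hence "rg_reach H \<alpha> lab F a u" "rg_reach H \<alpha> lab F u c"
        using all reach_sym[OF rg] by auto
      thus "rg_reach H \<alpha> lab F a c" unfolding rg_reach_def by auto
    qed
  qed
  have part1: "is_bridge H \<alpha> lab n e \<longrightarrow>
       (\<forall>C col. rg_component H \<alpha> lab n (rg_edges H \<alpha> - {e}) C \<and>
                proper_colouring H \<alpha> lab (rg_edges H \<alpha> - {e}) C col \<and>
                (\<exists>h\<in>e. lab h \<in> C \<and> col (lab h)) \<longrightarrow>
          w e = (\<Sum>i\<in>{v\<in>C. col v}. b i) - (\<Sum>j\<in>{v\<in>C. \<not> col v}. b j))"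
  proof (intro impI allI)
    fix C col assume br: "is_bridge H \<alpha> lab n e" and
      a: "rg_component H \<alpha> lab n (rg_edges H \<alpha> - {e}) C \<and>
                proper_colouring H \<alpha> lab (rg_edges H \<alpha> - {e}) C col \<and>
                (\<exists>h\<in>e. lab h \<in> C \<and> col (lab h))"
    have comp: "rg_component H \<alpha> lab n F C" and pc: "proper_colouring H \<alpha> lab F C col"
      and ex: "\<exists>h\<in>e. lab h \<in> C \<and> col (lab h)" using a unfolding F_def E_def by auto
    have nc: "\<not> rg_connected H \<alpha> lab n F" using br unfolding is_bridge_def F_def E_def by auto
    have fc: "finite C" "C \<subseteq> {1..n}" using comp_fin[OF comp] by auto
    have closed: "\<forall>h\<in>H. {h, \<alpha> h} \<in> rg_edges H \<alpha> - {e} \<and> lab h \<in> C \<longrightarrow>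
        lab (\<alpha> h) \<in> C \<and> col (lab h) \<noteq> col (lab (\<alpha> h))"
      using comp_closed[OF comp] pc unfolding proper_colouring_def F_def E_def by auto
    have K: "(\<Sum>v\<in>C. (if col v then 1 else -1) * b v) = w e *
     ((if lab h0 \<in> C then (if col (lab h0) then 1 else -1) else 0) +
      (if lab (\<alpha> h0) \<in> C then (if col (lab (\<alpha> h0)) then 1 else -1) else 0))"
      by (rule key[OF rg fc(1) vpC[OF fc(2)] h0 closed])
    have nb: "\<not> (lab h0 \<in> C \<and> lab (\<alpha> h0) \<in> C)" using both_conn[OF comp] nc by auto
    have "(if lab h0 \<in> C then (if col (lab h0) then 1 else -1) else 0) +
      (if lab (\<alpha> h0) \<in> C then (if col (lab (\<alpha> h0)) then 1 else -1) else (0::real)) = 1"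
      using ex nb h0(2) by auto
    thus "w e = (\<Sum>i\<in>{v\<in>C. col v}. b i) - (\<Sum>j\<in>{v\<in>C. \<not> col v}. b j)"
      using K signed_sum[OF fc(1), where col=col and b=b] by simp
  qed
  have part2: "\<not> is_bridge H \<alpha> lab n e \<longrightarrow>
       rg_connected H \<alpha> lab n (rg_edges H \<alpha> - {e}) \<and>
       rg_bipartite H \<alpha> lab (rg_edges H \<alpha> - {e}) {1..n} \<and>
       (\<exists>col. proper_colouring H \<alpha> lab (rg_edges H \<alpha> - {e}) {1..n} col \<and>
              (\<forall>h\<in>e. col (lab h))) \<and>
       (\<forall>col. proper_colouring H \<alpha> lab (rg_edges H \<alpha> - {e}) {1..n} col \<and>
              (\<forall>h\<in>e. col (lab h)) \<longrightarrow>
          {v\<in>{1..n}. col v} \<union> {v\<in>{1..n}. \<not> col v} = {1..n} \<and>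
          w e = ((\<Sum>i\<in>{v\<in>{1..n}. col v}. b i) - (\<Sum>j\<in>{v\<in>{1..n}. \<not> col v}. b j)) / 2)" (is "_ \<longrightarrow> ?C2")
  proof (intro impI)
    assume nbr: "\<not> is_bridge H \<alpha> lab n e"
    have cF: "rg_connected H \<alpha> lab n F" using nbr eE unfolding is_bridge_def F_def E_def by auto
    obtain C where C: "rg_component H \<alpha> lab n F C" "rg_bipartite H \<alpha> lab F C"
      using static unfolding static_edge_def F_def E_def by auto
    have Cn: "C = {1..n}" using C(1) cF unfolding rg_component_def rg_connected_def by auto
    have bip: "rg_bipartite H \<alpha> lab F {1..n}" using C(2) Cn by simp
    then obtain col0 where pc0: "proper_colouring H \<alpha> lab F {1..n} col0"
      unfolding rg_bipartite_def by auto
    have same: "col0 (lab h0) = col0 (lab (\<alpha> h0))"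
    proof (rule ccontr)
      assume d: "col0 (lab h0) \<noteq> col0 (lab (\<alpha> h0))"
      have "proper_colouring H \<alpha> lab (rg_edges H \<alpha>) {1..n} col0"
        unfolding proper_colouring_def
      proof (intro ballI impI)
        fix h assume h: "h \<in> H" "{h, \<alpha> h} \<in> rg_edges H \<alpha> \<and> lab h \<in> {1..n}"
        show "col0 (lab h) \<noteq> col0 (lab (\<alpha> h))"
        proof (cases "{h, \<alpha> h} = e")
          case True
          hence "h = h0 \<or> h = \<alpha> h0" using h0 by (auto simp: doubleton_eq_iff)
          thus ?thesis using d inv h0 by auto
        next
          case False
          thus ?thesis using pc0 h unfolding proper_colouring_def F_def E_def by auto
        qed
      qed
      thus False using nonbip unfolding rg_bipartite_def by auto
    qed
    define col1 where "col1 = (if col0 (lab h0) then col0 else (\<lambda>v. \<not> col0 v))"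
    have pc1: "proper_colouring H \<alpha> lab F {1..n} col1"
      using pc0 unfolding proper_colouring_def col1_def by auto
    have e1: "\<forall>h\<in>e. col1 (lab h)" using same h0(2) unfolding col1_def by auto
    have last: "\<forall>col. proper_colouring H \<alpha> lab (rg_edges H \<alpha> - {e}) {1..n} col \<and>
              (\<forall>h\<in>e. col (lab h)) \<longrightarrow>
          {v\<in>{1..n}. col v} \<union> {v\<in>{1..n}. \<not> col v} = {1..n} \<and>
          w e = ((\<Sum>i\<in>{v\<in>{1..n}. col v}. b i) - (\<Sum>j\<in>{v\<in>{1..n}. \<not> col v}. b j)) / 2"
    proof (intro allI impI conjI)
      fix col assume a: "proper_colouring H \<alpha> lab (rg_edges H \<alpha> - {e}) {1..n} col \<and>
              (\<forall>h\<in>e. col (lab h))"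
      show "{v\<in>{1..n}. col v} \<union> {v\<in>{1..n}. \<not> col v} = {1..n}" by auto
      have closed: "\<forall>h\<in>H. {h, \<alpha> h} \<in> rg_edges H \<alpha> - {e} \<and> lab h \<in> {1..n} \<longrightarrow>
        lab (\<alpha> h) \<in> {1..n} \<and> col (lab h) \<noteq> col (lab (\<alpha> h))"
        using a labH aH unfolding proper_colouring_def by auto
      have K: "(\<Sum>v\<in>{1..n}. (if col v then 1 else -1) * b v) = w e *
       ((if lab h0 \<in> {1..n} then (if col (lab h0) then 1 else -1) else 0) +
        (if lab (\<alpha> h0) \<in> {1..n} then (if col (lab (\<alpha> h0)) then 1 else -1) else 0))"
        by (rule key[OF rg _ vpC h0 closed]) auto
      have "(if lab h0 \<in> {1..n} then (if col (lab h0) then 1 else -1) else 0) +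
        (if lab (\<alpha> h0) \<in> {1..n} then (if col (lab (\<alpha> h0)) then 1 else -1) else (0::real)) = 2"
        using a labH h0 ah0 by auto
      thus "w e = ((\<Sum>i\<in>{v\<in>{1..n}. col v}. b i) - (\<Sum>j\<in>{v\<in>{1..n}. \<not> col v}. b j)) / 2"
        using K signed_sum[where C="{1..n}" and col=col and b=b] by simp
    qed
    show ?C2
      using cF bip pc1 e1 last unfolding F_def E_def by blast
  qed
  show ?thesis using part1 part2 by blast
qed

end
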